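(* Let $N$ be a surface in a three-dimensional contact manifold with subriemannian structure, let $(v_1,v_2)$ be an adapted frame near a regular point of $N$, let $v_0$ be the Reeb field, and define functions $a_{ij}^k$ by $[v_i,v_j]=\sum_{k=0}^2a_{ij}^kv_k$ for $i,j\in\{0,1,2\}$. Then on the regular points of $N$ where the frame is defined, the curvature of transversality satisfies \[ \mathfrak r=-a_{01}^2-\mathfrak a\,a_{12}^2 . \]
   Context: A three-dimensional contact manifold $M$ carries a rank-2 distribution $\Delta$ (kernel of a contact form) with an inner product on $\Delta$. Fix the contact form $\alpha_0$ with $\ker\alpha_0=\Delta$ normalized so that $d\alpha_0(w_1,w_2)=\pm1$ for orthonormal $w_1,w_2\in\Delta_x$, with convention $d\alpha(X,Y)=X\alpha(Y)-Y\alpha(X)-\alpha([X,Y])$; the Reeb field $v_0$ satisfies $\alpha_0(v_0)=1$, $d\alpha_0(v_0,\cdot)=0$. For a surface $N\subset M$, $x\in N$ is regular if $T_xN\neq\Delta_x$. An adapted frame near a regular point is a pair of local orthonormal sections $v_1,v_2$ of $\Delta$ with $v_1$ tangent to $N$ along $N$ and $d\alpha_0(v_1,v_2)=1$. The degree of transversality (DOT) $\mathfrak a$ is the function on regular points with $v_0-\mathfrak a v_2\in TN$. The curvature of transversality (COT) is $\mathfrak r=v_1\mathfrak a-\mathfrak a^2$. *)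

theory Defs
  imports "HOL-Analysis.Analysis"
begin

text \<open>Everything is local, so we work in a coordinate chart: an open set U of real^3.
  Vector fields are maps real^3 => real^3, a 1-form alpha is represented by its
  coefficient covector field A (alpha_x(w) = A x \<bullet> w).\<close>

coinductive smooth_on :: "(real^3) set \<Rightarrow> (real^3 \<Rightarrow> 'b::real_normed_vector) \<Rightarrow> bool"
  for U where
  "f differentiable_on U \<Longrightarrow> (\<forall>v. smooth_on U (\<lambda>x. frechet_derivative f (at x) v))
     \<Longrightarrow> smooth_on U f"

text \<open>Lie bracket [X,Y] = DY.X - DX.Y, so that [X,Y]f = X(Yf) - Y(Xf).\<close>
definition lie :: "(real^3 \<Rightarrow> real^3) \<Rightarrow> (real^3 \<Rightarrow> real^3) \<Rightarrow> real^3 \<Rightarrow> real^3" where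
  "lie X Y x = frechet_derivative Y (at x) (X x) - frechet_derivative X (at x) (Y x)"

text \<open>Exterior derivative of alpha = A.dx at x, convention
  d alpha(X,Y) = X alpha(Y) - Y alpha(X) - alpha([X,Y]).\<close>
definition dalpha :: "(real^3 \<Rightarrow> real^3) \<Rightarrow> real^3 \<Rightarrow> real^3 \<Rightarrow> real^3 \<Rightarrow> real" where
  "dalpha A x u w = (frechet_derivative A (at x) u) \<bullet> w - (frechet_derivative A (at x) w) \<bullet> u"

definition distr :: "(real^3 \<Rightarrow> real^3) \<Rightarrow> real^3 \<Rightarrow> (real^3) set" where
  "distr A x = {w. A x \<bullet> w = 0}"

definition contact_form :: "(real^3) set \<Rightarrow> (real^3 \<Rightarrow> real^3) \<Rightarrow> bool" where
  "contact_form U A \<longleftrightarrow> open U \<and> smooth_on U A \<and>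
     (\<forall>x\<in>U. A x \<noteq> 0 \<and>
        (\<forall>u\<in>distr A x. u \<noteq> 0 \<longrightarrow> (\<exists>w\<in>distr A x. dalpha A x u w \<noteq> 0)))"

definition sr_metric :: "(real^3) set \<Rightarrow> (real^3 \<Rightarrow> real^3) \<Rightarrow> (real^3 \<Rightarrow> real^3 \<Rightarrow> real^3 \<Rightarrow> real) \<Rightarrow> bool" where
  "sr_metric U A g \<longleftrightarrow> (\<forall>u w. smooth_on U (\<lambda>x. g x u w)) \<and>
     (\<forall>x\<in>U. bilinear (g x) \<and>
        (\<forall>u\<in>distr A x. \<forall>w\<in>distr A x. g x u w = g x w u) \<and>
        (\<forall>u\<in>distr A x. u \<noteq> 0 \<longrightarrow> g x u u > 0))"

definition normalized :: "(real^3) set \<Rightarrow> (real^3 \<Rightarrow> real^3) \<Rightarrow> (real^3 \<Rightarrow> real^3 \<Rightarrow> real^3 \<Rightarrow> real) \<Rightarrow> bool" where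
  "normalized U A g \<longleftrightarrow> (\<forall>x\<in>U. \<forall>w1\<in>distr A x. \<forall>w2\<in>distr A x.
      g x w1 w1 = 1 \<and> g x w2 w2 = 1 \<and> g x w1 w2 = 0 \<longrightarrow> \<bar>dalpha A x w1 w2\<bar> = 1)"

definition reeb :: "(real^3) set \<Rightarrow> (real^3 \<Rightarrow> real^3) \<Rightarrow> (real^3 \<Rightarrow> real^3) \<Rightarrow> bool" where
  "reeb U A v0 \<longleftrightarrow> smooth_on U v0 \<and>
     (\<forall>x\<in>U. A x \<bullet> v0 x = 1 \<and> (\<forall>w. dalpha A x (v0 x) w = 0))"

definition surface :: "(real^3) set \<Rightarrow> (real^3) set \<Rightarrow> bool" where
  "surface U N \<longleftrightarrow> N \<subseteq> U \<and> (\<forall>p\<in>N. \<exists>W (F::real^3 \<Rightarrow> real). open W \<and> p \<in> W \<and>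
      smooth_on W F \<and> (\<forall>x\<in>W. frechet_derivative F (at x) \<noteq> (\<lambda>_. 0)) \<and>
      N \<inter> W = {x\<in>W. F x = 0})"

definition tangent_space :: "(real^3) set \<Rightarrow> real^3 \<Rightarrow> (real^3) set" where
  "tangent_space N x = {v. \<exists>(\<gamma>::real \<Rightarrow> real^3) e. e > 0 \<and> \<gamma> 0 = x \<and>
      (\<forall>t\<in>{-e<..<e}. \<gamma> t \<in> N) \<and> (\<gamma> has_vector_derivative v) (at 0)}"

definition regular_pt :: "(real^3 \<Rightarrow> real^3) \<Rightarrow> (real^3) set \<Rightarrow> real^3 \<Rightarrow> bool" where
  "regular_pt A N x \<longleftrightarrow> x \<in> N \<and> tangent_space N x \<noteq> distr A x"

definition has_deriv_along :: "(real^3) set \<Rightarrow> (real^3 \<Rightarrow> real) \<Rightarrow> real^3 \<Rightarrow> real^3 \<Rightarrow> real \<Rightarrow> bool" where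
  "has_deriv_along N f x v d \<longleftrightarrow> (\<forall>(\<gamma>::real \<Rightarrow> real^3) e. e > 0 \<and> \<gamma> 0 = x \<and>
      (\<forall>t\<in>{-e<..<e}. \<gamma> t \<in> N) \<and> (\<gamma> has_vector_derivative v) (at 0) \<longrightarrow>
      ((f \<circ> \<gamma>) has_real_derivative d) (at 0))"

definition deriv_along :: "(real^3) set \<Rightarrow> (real^3 \<Rightarrow> real) \<Rightarrow> real^3 \<Rightarrow> real^3 \<Rightarrow> real" where
  "deriv_along N f x v = (THE d. has_deriv_along N f x v d)"

definition adapted_frame :: "(real^3) set \<Rightarrow> (real^3 \<Rightarrow> real^3) \<Rightarrow> (real^3 \<Rightarrow> real^3 \<Rightarrow> real^3 \<Rightarrow> real)
     \<Rightarrow> (real^3) set \<Rightarrow> (real^3) set \<Rightarrow> (real^3 \<Rightarrow> real^3) \<Rightarrow> (real^3 \<Rightarrow> real^3) \<Rightarrow> bool" where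
  "adapted_frame U A g N V v1 v2 \<longleftrightarrow> open V \<and> V \<subseteq> U \<and> smooth_on V v1 \<and> smooth_on V v2 \<and>
     (\<forall>x\<in>V. v1 x \<in> distr A x \<and> v2 x \<in> distr A x \<and>
        g x (v1 x) (v1 x) = 1 \<and> g x (v2 x) (v2 x) = 1 \<and> g x (v1 x) (v2 x) = 0 \<and>
        dalpha A x (v1 x) (v2 x) = 1) \<and>
     (\<forall>x\<in>N \<inter> V. v1 x \<in> tangent_space N x)"

definition DOT :: "(real^3) set \<Rightarrow> (real^3 \<Rightarrow> real^3) \<Rightarrow> (real^3 \<Rightarrow> real^3) \<Rightarrow> real^3 \<Rightarrow> real" where
  "DOT N v0 v2 x = (THE a. v0 x - a *\<^sub>R v2 x \<in> tangent_space N x)"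

definition COT :: "(real^3) set \<Rightarrow> (real^3 \<Rightarrow> real^3) \<Rightarrow> (real^3 \<Rightarrow> real^3) \<Rightarrow> (real^3 \<Rightarrow> real^3) \<Rightarrow> real^3 \<Rightarrow> real" where
  "COT N v0 v1 v2 x = deriv_along N (DOT N v0 v2) x (v1 x) - (DOT N v0 v2 x)\<^sup>2"

end

theory Submission
  imports Defs
begin

lemma smooth_diff: "smooth_on U f \<Longrightarrow> f differentiable_on U"
  by (erule smooth_on.cases) simp
lemma smooth_D: "smooth_on U f \<Longrightarrow> smooth_on U (\<lambda>x. frechet_derivative f (at x) v)"
  by (erule smooth_on.cases) simp
lemma smooth_hasD: "smooth_on U f \<Longrightarrow> open U \<Longrightarrow> x\<in>U \<Longrightarrow>
   (f has_derivative frechet_derivative f (at x)) (at x)"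
  using smooth_diff differentiable_on_eq_differentiable_at frechet_derivative_works by blast
lemma smooth_cont: "smooth_on U f \<Longrightarrow> open U \<Longrightarrow> continuous_on U f"
  by (meson differentiable_imp_continuous_on smooth_diff)

lemma line_deriv:
  fixes g :: "real^3 \<Rightarrow> real"
  assumes "(g has_derivative g') (at (x + t *\<^sub>R u))"
  shows "((\<lambda>\<tau>. g (x + \<tau> *\<^sub>R u)) has_real_derivative g' u) (at t)"
proof -
  have l: "linear g'" using assms has_derivative_linear by blast
  have "((\<lambda>\<tau>. x + \<tau> *\<^sub>R u) has_derivative (\<lambda>h. h *\<^sub>R u)) (at t)"
    by (auto intro!: derivative_eq_intros)
  from has_derivative_compose[OF this assms]
  have "((\<lambda>\<tau>. g (x + \<tau> *\<^sub>R u)) has_derivative (\<lambda>h. g' (h *\<^sub>R u))) (at t)" .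
  moreover have "(\<lambda>h. g' (h *\<^sub>R u)) = (*) (g' u)"
    using linear_scale[OF l] by (auto simp: fun_eq_iff)
  ultimately show ?thesis by (simp add: has_field_derivative_def)
qed

lemma delta_lemma:
  fixes F :: "real^3 \<Rightarrow> real"
  assumes sm: "smooth_on W F" and W: "open W" and s: "s > 0"
    and inW: "\<And>\<sigma> \<tau>. \<sigma> \<in> {0..s} \<Longrightarrow> \<tau> \<in> {0..s} \<Longrightarrow> x + \<sigma> *\<^sub>R u + \<tau> *\<^sub>R w \<in> W"
  shows "\<exists>\<sigma>\<in>{0..s}. \<exists>\<tau>\<in>{0..s}.
     F (x + s *\<^sub>R u + s *\<^sub>R w) - F (x + s *\<^sub>R u) - F (x + s *\<^sub>R w) + F x
     = s\<^sup>2 * frechet_derivative (\<lambda>y. frechet_derivative F (at y) u) (at (x + \<sigma> *\<^sub>R u + \<tau> *\<^sub>R w)) w"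
proof -
  define p where "p = (\<lambda>y. frechet_derivative F (at y) u)"
  have smp: "smooth_on W p" unfolding p_def using sm by (rule smooth_D)
  define \<phi> where "\<phi> = (\<lambda>\<sigma>. F ((x + s *\<^sub>R w) + \<sigma> *\<^sub>R u) - F (x + \<sigma> *\<^sub>R u))"
  have "\<And>\<sigma>. 0 \<le> \<sigma> \<Longrightarrow> \<sigma> \<le> s \<Longrightarrow> (\<phi> has_real_derivative (p ((x + s *\<^sub>R w) + \<sigma> *\<^sub>R u) - p (x + \<sigma> *\<^sub>R u))) (at \<sigma>)"
  proof -
    fix \<sigma> assume h: "0 \<le> \<sigma>" "\<sigma> \<le> s"
    have i1: "(x + s *\<^sub>R w) + \<sigma> *\<^sub>R u \<in> W" using inW[of \<sigma> s] h s by (simp add: algebra_simps)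
    have i2: "x + \<sigma> *\<^sub>R u \<in> W" using inW[of \<sigma> 0] h s by simp
    show "(\<phi> has_real_derivative (p ((x + s *\<^sub>R w) + \<sigma> *\<^sub>R u) - p (x + \<sigma> *\<^sub>R u))) (at \<sigma>)"
      unfolding \<phi>_def p_def
      by (intro DERIV_diff line_deriv smooth_hasD[OF sm W] i1 i2)
  qed
  from MVT2[OF s this] obtain \<sigma> where \<sigma>: "0 < \<sigma>" "\<sigma> < s"
    "\<phi> s - \<phi> 0 = (s - 0) * (p ((x + s *\<^sub>R w) + \<sigma> *\<^sub>R u) - p (x + \<sigma> *\<^sub>R u))" by auto
  define \<psi> where "\<psi> = (\<lambda>\<tau>. p ((x + \<sigma> *\<^sub>R u) + \<tau> *\<^sub>R w))"
  have "\<And>\<tau>. 0 \<le> \<tau> \<Longrightarrow> \<tau> \<le> s \<Longrightarrow> (\<psi> has_real_derivative frechet_derivative p (at (x + \<sigma> *\<^sub>R u + \<tau> *\<^sub>R w)) w) (at \<tau>)"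
  proof -
    fix \<tau> assume h: "0 \<le> \<tau>" "\<tau> \<le> s"
    have i1: "x + \<sigma> *\<^sub>R u + \<tau> *\<^sub>R w \<in> W" using inW[of \<sigma> \<tau>] h \<sigma> by simp
    show "(\<psi> has_real_derivative frechet_derivative p (at (x + \<sigma> *\<^sub>R u + \<tau> *\<^sub>R w)) w) (at \<tau>)"
      unfolding \<psi>_def by (intro line_deriv smooth_hasD[OF smp W] i1)
  qed
  from MVT2[OF s this] obtain \<tau> where \<tau>: "0 < \<tau>" "\<tau> < s"
    "\<psi> s - \<psi> 0 = (s - 0) * frechet_derivative p (at (x + \<sigma> *\<^sub>R u + \<tau> *\<^sub>R w)) w" by auto
  have "F (x + s *\<^sub>R u + s *\<^sub>R w) - F (x + s *\<^sub>R u) - F (x + s *\<^sub>R w) + F x = \<phi> s - \<phi> 0"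
    unfolding \<phi>_def by (simp add: algebra_simps)
  also have "\<dots> = s * (\<psi> s - \<psi> 0)" using \<sigma>(3) unfolding \<psi>_def by (simp add: algebra_simps)
  also have "\<dots> = s\<^sup>2 * frechet_derivative p (at (x + \<sigma> *\<^sub>R u + \<tau> *\<^sub>R w)) w"
    using \<tau>(3) by (simp add: power2_eq_square)
  finally show ?thesis unfolding p_def using \<sigma> \<tau> by force
qed

lemma abs_aux: "\<bar>a - c\<bar> < \<bar>c - d\<bar> / 2 \<Longrightarrow> \<bar>b - d\<bar> < \<bar>c - d\<bar> / 2 \<Longrightarrow> a = (b::real) \<Longrightarrow> False"
  unfolding abs_real_def by (auto split: if_splits)

lemma clairaut:
  fixes F :: "real^3 \<Rightarrow> real"
  assumes sm: "smooth_on W F" and W: "open W" and x: "x \<in> W"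
  shows "frechet_derivative (\<lambda>y. frechet_derivative F (at y) u) (at x) w
       = frechet_derivative (\<lambda>y. frechet_derivative F (at y) w) (at x) u"
proof (rule ccontr)
  define d1 where "d1 = (\<lambda>z. frechet_derivative (\<lambda>y. frechet_derivative F (at y) u) (at z) w)"
  define d2 where "d2 = (\<lambda>z. frechet_derivative (\<lambda>y. frechet_derivative F (at y) w) (at z) u)"
  assume ne: "\<not> ?thesis"
  hence ne': "d1 x \<noteq> d2 x" unfolding d1_def d2_def .
  define e where "e = \<bar>d1 x - d2 x\<bar> / 2"
  have e: "e > 0" using ne' by (simp add: e_def)
  have c1: "continuous_on W d1" unfolding d1_def by (intro smooth_cont smooth_D W sm)
  have c2: "continuous_on W d2" unfolding d2_def by (intro smooth_cont smooth_D W sm)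
  obtain \<delta>1 where d1: "\<delta>1>0" "\<forall>y\<in>W. dist y x < \<delta>1 \<longrightarrow> dist (d1 y) (d1 x) < e"
    using c1 x e unfolding continuous_on_iff by metis
  obtain \<delta>2 where d2: "\<delta>2>0" "\<forall>y\<in>W. dist y x < \<delta>2 \<longrightarrow> dist (d2 y) (d2 x) < e"
    using c2 x e unfolding continuous_on_iff by metis
  obtain r where r: "r>0" "ball x r \<subseteq> W" using W x open_contains_ball by blast
  define \<delta> where "\<delta> = min r (min \<delta>1 \<delta>2)"
  have \<delta>: "\<delta> > 0" using r d1 d2 by (simp add: \<delta>_def)
  define s where "s = \<delta> / (2 * (norm u + norm w + 1))"
  have pos: "0 < 2 * (norm u + norm w + 1)" by (smt (verit) norm_ge_zero)
  have s: "s > 0" using \<delta> pos by (simp add: s_def divide_pos_pos)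
  have close: "dist (x + \<sigma> *\<^sub>R u + \<tau> *\<^sub>R w) x < \<delta>" if h: "\<sigma>\<in>{0..s}" "\<tau>\<in>{0..s}" for \<sigma> \<tau>
  proof -
    have "dist (x + \<sigma> *\<^sub>R u + \<tau> *\<^sub>R w) x = norm (\<sigma> *\<^sub>R u + \<tau> *\<^sub>R w)" by (simp add: dist_norm)
    also have "\<dots> \<le> \<sigma> * norm u + \<tau> * norm w" using h
      by (metis (no_types, lifting) atLeastAtMost_iff norm_scaleR norm_triangle_ineq abs_of_nonneg)
    also have "\<dots> \<le> s * norm u + s * norm w" using h
      by (intro add_mono mult_right_mono) auto
    also have "\<dots> < \<delta>"
    proof -
      have "s * (norm u + norm w) < s * (2 * (norm u + norm w + 1))"
        using s pos by (intro mult_strict_left_mono) (auto simp: algebra_simps)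
      also have "\<dots> = \<delta>" unfolding s_def using pos by simp
      finally show ?thesis by (simp add: algebra_simps)
    qed
    finally show ?thesis .
  qed
  have inW1: "x + \<sigma> *\<^sub>R u + \<tau> *\<^sub>R w \<in> W" if "\<sigma>\<in>{0..s}" "\<tau>\<in>{0..s}" for \<sigma> \<tau>
    using close[OF that] r \<delta>_def by (auto simp: dist_commute)
  have inW2: "x + \<sigma> *\<^sub>R w + \<tau> *\<^sub>R u \<in> W" if "\<sigma>\<in>{0..s}" "\<tau>\<in>{0..s}" for \<sigma> \<tau>
    using inW1[of \<tau> \<sigma>] that by (simp add: algebra_simps)
  obtain \<sigma>1 \<tau>1 where a1: "\<sigma>1\<in>{0..s}" "\<tau>1\<in>{0..s}"
     "F (x + s *\<^sub>R u + s *\<^sub>R w) - F (x + s *\<^sub>R u) - F (x + s *\<^sub>R w) + F x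
     = s\<^sup>2 * d1 (x + \<sigma>1 *\<^sub>R u + \<tau>1 *\<^sub>R w)"
    using delta_lemma[OF sm W s inW1] unfolding d1_def by blast
  obtain \<sigma>2 \<tau>2 where a2: "\<sigma>2\<in>{0..s}" "\<tau>2\<in>{0..s}"
     "F (x + s *\<^sub>R w + s *\<^sub>R u) - F (x + s *\<^sub>R w) - F (x + s *\<^sub>R u) + F x
     = s\<^sup>2 * d2 (x + \<sigma>2 *\<^sub>R w + \<tau>2 *\<^sub>R u)"
    using delta_lemma[OF sm W s inW2] unfolding d2_def by blast
  have "s\<^sup>2 * d1 (x + \<sigma>1 *\<^sub>R u + \<tau>1 *\<^sub>R w) = s\<^sup>2 * d2 (x + \<sigma>2 *\<^sub>R w + \<tau>2 *\<^sub>R u)"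
    using a1(3) a2(3) by (simp add: algebra_simps)
  hence eq: "d1 (x + \<sigma>1 *\<^sub>R u + \<tau>1 *\<^sub>R w) = d2 (x + \<sigma>2 *\<^sub>R w + \<tau>2 *\<^sub>R u)" using s by simp
  have "dist (d1 (x + \<sigma>1 *\<^sub>R u + \<tau>1 *\<^sub>R w)) (d1 x) < e"
    using d1(2) inW1[OF a1(1,2)] close[OF a1(1,2)] \<delta>_def by auto
  moreover have "dist (d2 (x + \<sigma>2 *\<^sub>R w + \<tau>2 *\<^sub>R u)) (d2 x) < e"
  proof -
    have "dist (x + \<sigma>2 *\<^sub>R w + \<tau>2 *\<^sub>R u) x < \<delta>"
      using close[OF a2(2,1)] by (simp add: algebra_simps)
    thus ?thesis using d2(2) inW2[OF a2(1,2)] \<delta>_def by auto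
  qed
  ultimately show False using eq unfolding e_def dist_real_def
    using abs_aux by blast
qed

lemma tangent_ker:
  fixes F :: "real^3 \<Rightarrow> real"
  assumes sm: "smooth_on W F" and W: "open W" and y: "y \<in> W"
    and NW: "N \<inter> W = {x\<in>W. F x = 0}" and v: "v \<in> tangent_space N y"
  shows "frechet_derivative F (at y) v = 0"
proof -
  obtain \<gamma> e where g: "e > 0" "\<gamma> 0 = y" "\<forall>t\<in>{-e<..<e}. \<gamma> t \<in> N" "(\<gamma> has_vector_derivative v) (at 0)"
    using v unfolding tangent_space_def by blast
  have "isCont \<gamma> 0" using has_vector_derivative_continuous[OF g(4)] .
  obtain r where r: "r>0" "ball y r \<subseteq> W" using W y open_contains_ball by blast
  obtain d where d: "d>0" "\<forall>t. dist t 0 < d \<longrightarrow> dist (\<gamma> t) (\<gamma> 0) < r"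
    using \<open>isCont \<gamma> 0\<close> r(1) unfolding continuous_at_eps_delta by blast
  have z: "(\<lambda>_. 0) t = F (\<gamma> t)" if "t \<in> ball 0 (min d e)" for t
  proof -
    have "\<gamma> t \<in> ball y r" using d(2) that g(2) by (auto simp: dist_commute)
    hence "\<gamma> t \<in> W" using r by blast
    moreover have "\<gamma> t \<in> N" using g(3) that by (auto simp: dist_real_def abs_less_iff)
    ultimately have "\<gamma> t \<in> {x\<in>W. F x = 0}" using NW by blast
    thus ?thesis by simp
  qed
  have Fd: "(F has_derivative frechet_derivative F (at y)) (at (\<gamma> 0))"
    using smooth_hasD[OF sm W y] g(2) by simp
  have D: "((\<lambda>t. F (\<gamma> t)) has_derivative (\<lambda>h. frechet_derivative F (at y) (h *\<^sub>R v))) (at 0)"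
    using has_derivative_compose[OF g(4)[unfolded has_vector_derivative_def] Fd] .
  have lin: "linear (frechet_derivative F (at y))" using smooth_hasD[OF sm W y] has_derivative_linear by blast
  have "(\<lambda>h. frechet_derivative F (at y) (h *\<^sub>R v)) = (*) (frechet_derivative F (at y) v)"
    using linear_scale[OF lin] by (auto simp: fun_eq_iff)
  hence D1: "((\<lambda>t. F (\<gamma> t)) has_real_derivative frechet_derivative F (at y) v) (at 0)"
    using D by (simp add: has_field_derivative_def)
  have c0: "((\<lambda>_. 0::real) has_derivative (*) 0) (at 0)"
    using DERIV_const[of "0::real" "at (0::real)"] by (simp add: has_field_derivative_def)
  have "((\<lambda>t. F (\<gamma> t)) has_derivative (*) 0) (at 0)"
    by (rule has_derivative_transform_within_open[OF c0 open_ball[of "0::real" "min d e"] _ z]) (use d(1) g(1) in simp_all)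
  hence "((\<lambda>t. F (\<gamma> t)) has_real_derivative 0) (at 0)"
    by (simp add: has_field_derivative_def)
  from DERIV_unique[OF D1 this] show ?thesis .
qed

lemma ker_tangent:
  fixes F :: "real^3 \<Rightarrow> real"
  assumes sm: "smooth_on W F" and W: "open W" and y: "y \<in> W" and Fy: "F y = 0"
    and nz: "frechet_derivative F (at y) \<noteq> (\<lambda>_. 0)"
    and NW: "N \<inter> W = {x\<in>W. F x = 0}"
    and v: "frechet_derivative F (at y) v = 0"
  shows "v \<in> tangent_space N y"
proof -
  define \<phi> where "\<phi> = frechet_derivative F (at y)"
  have lin: "linear \<phi>" unfolding \<phi>_def using smooth_hasD[OF sm W y] has_derivative_linear by blast
  obtain b where b: "\<phi> b \<noteq> 0" using nz unfolding \<phi>_def by auto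
  define m where "m = (1 / \<phi> b) *\<^sub>R b"
  have m: "\<phi> m = 1" using b linear_scale[OF lin] by (simp add: m_def)
  define \<Phi> where "\<Phi> = (\<lambda>z. z + (F z - \<phi> z) *\<^sub>R m)"
  define f' where "f' = (\<lambda>z. Blinfun (\<lambda>h. h + (frechet_derivative F (at z) h - \<phi> h) *\<^sub>R m))"
  have bl: "bounded_linear (\<lambda>h. h + (frechet_derivative F (at z) h - \<phi> h) *\<^sub>R m)" if "z \<in> W" for z
  proof -
    have l2: "linear (frechet_derivative F (at z))" using smooth_hasD[OF sm W that] has_derivative_linear by blast
    have "linear (\<lambda>h. h + (frechet_derivative F (at z) h - \<phi> h) *\<^sub>R m)"
      by (intro linearI) (auto simp: linear_add[OF lin] linear_add[OF l2] linear_scale[OF lin] linear_scale[OF l2] algebra_simps)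
    thus ?thesis using linear_conv_bounded_linear by blast
  qed
  have f'a: "blinfun_apply (f' z) = (\<lambda>h. h + (frechet_derivative F (at z) h - \<phi> h) *\<^sub>R m)" if "z\<in>W" for z
    unfolding f'_def using bl[OF that] bounded_linear_Blinfun_apply by blast
  have derf: "(\<Phi> has_derivative blinfun_apply (f' z)) (at z)" if "z \<in> W" for z
  proof -
    have l: "(\<phi> has_derivative \<phi>) (at z)" using lin linear_imp_has_derivative by blast
    show ?thesis unfolding f'a[OF that] \<Phi>_def
      by (intro has_derivative_add has_derivative_ident has_derivative_scaleR_left has_derivative_diff
          smooth_hasD[OF sm W that] l)
  qed
  have contf: "continuous_on W f'"
  proof (rule continuous_on_blinfun_componentwise)
    fix i :: "real^3"
    have c: "continuous_on W (\<lambda>z. frechet_derivative F (at z) i)" by (intro smooth_cont smooth_D sm W)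
    have "continuous_on W (\<lambda>z. i + (frechet_derivative F (at z) i - \<phi> i) *\<^sub>R m)"
      by (intro continuous_intros c)
    thus "continuous_on W (\<lambda>z. blinfun_apply (f' z) i)"
      by (rule continuous_on_cong[THEN iffD1, rotated 2]) (auto simp: f'a)
  qed
  have f'y: "blinfun_apply (f' y) = id" using f'a[OF y] by (auto simp: \<phi>_def)
  have idd: "id_blinfun o\<^sub>L f' y = id_blinfun"
    by (rule blinfun_eqI) (simp add: f'y)
  obtain U' V g g' where ift: "open U'" "U' \<subseteq> W" "y \<in> U'" "open V" "\<Phi> y \<in> V" "homeomorphism U' V \<Phi> g"
    "\<And>w. w \<in> V \<Longrightarrow> (g has_derivative (g' w)) (at w)"
    "\<And>w. w \<in> V \<Longrightarrow> g' w = inv (blinfun_apply (f'(g w)))"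
    using inverse_function_theorem[OF W derf contf y idd] by metis
  have hom: "\<forall>x\<in>U'. g (\<Phi> x) = x" "\<Phi> ` U' = V" "\<forall>w\<in>V. \<Phi> (g w) = w" "g ` V = U'"
    using ift(6) unfolding homeomorphism_def by auto
  have Fphi: "F z = \<phi> (\<Phi> z)" for z
    unfolding \<Phi>_def using m by (simp add: linear_add[OF lin] linear_scale[OF lin])
  define z0 where "z0 = \<Phi> y"
  have gz0: "g z0 = y" using hom(1) ift(3) by (simp add: z0_def)
  obtain r where r: "r>0" "ball z0 r \<subseteq> V" using ift(4,5) open_contains_ball z0_def by blast
  define e where "e = r / (norm v + 1)"
  have nv: "norm v + 1 > 0" by (smt (verit) norm_ge_zero)
  have e: "e > 0" using r nv by (simp add: e_def)
  define \<gamma> where "\<gamma> = (\<lambda>t. g (z0 + t *\<^sub>R v))"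
  have inV: "z0 + t *\<^sub>R v \<in> V" if "t\<in>{-e<..<e}" for t
  proof -
    have "norm (t *\<^sub>R v) = \<bar>t\<bar> * norm v" by simp
    also have "\<dots> \<le> e * norm v" using that by (intro mult_right_mono) auto
    also have "\<dots> < e * (norm v + 1)" using e by simp
    also have "\<dots> = r" unfolding e_def using nv by simp
    finally have "dist z0 (z0 + t *\<^sub>R v) < r" by (simp add: dist_norm)
    thus ?thesis using r by auto
  qed
  have inN: "\<gamma> t \<in> N" if "t\<in>{-e<..<e}" for t
  proof -
    have "\<gamma> t \<in> U'" using hom(4) inV[OF that] unfolding \<gamma>_def by blast
    hence "\<gamma> t \<in> W" using ift(2) by blast
    moreover have "F (\<gamma> t) = 0"
    proof -
      have "F (\<gamma> t) = \<phi> (z0 + t *\<^sub>R v)" unfolding Fphi \<gamma>_def using hom(3) inV[OF that] by simp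
      also have "\<dots> = \<phi> z0" using v unfolding \<phi>_def[symmetric] by (simp add: linear_add[OF lin] linear_scale[OF lin])
      also have "\<dots> = 0" using Fphi[of y] Fy z0_def by simp
      finally show ?thesis .
    qed
    ultimately show ?thesis using NW by blast
  qed
  have g'z0: "g' z0 = id" using ift(8)[OF ift(5)[folded z0_def]] gz0 f'y by simp
  have lineD: "((\<lambda>t. z0 + t *\<^sub>R v) has_derivative (\<lambda>h. h *\<^sub>R v)) (at 0)"
    by (auto intro!: derivative_eq_intros)
  have hg: "(g has_derivative g' z0) (at ((\<lambda>t. z0 + t *\<^sub>R v) 0))"
    using ift(7)[OF ift(5)[folded z0_def]] by simp
  from has_derivative_compose[OF lineD hg]
  have "(\<gamma> has_derivative (\<lambda>h. g' z0 (h *\<^sub>R v))) (at 0)" unfolding \<gamma>_def .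
  hence "(\<gamma> has_derivative (\<lambda>h. h *\<^sub>R v)) (at 0)" using g'z0 by simp
  hence "(\<gamma> has_vector_derivative v) (at 0)" by (simp add: has_vector_derivative_def)
  moreover have "\<gamma> 0 = y" using gz0 by (simp add: \<gamma>_def)
  ultimately show ?thesis unfolding tangent_space_def using e inN by blast
qed

lemma lin_expand:
  fixes L :: "real^3 \<Rightarrow> real"
  assumes l: "linear L"
  shows "L w = (\<Sum>j\<in>UNIV. w$j * L (axis j 1))"
proof -
  have "L w = L (\<Sum>j\<in>UNIV. w$j *\<^sub>R axis j 1)"
    using basis_expansion[of w] by (simp add: scalar_mult_eq_scaleR)
  also have "\<dots> = (\<Sum>j\<in>UNIV. w$j * L (axis j 1))"
    by (simp add: linear_sum[OF l] linear_scale[OF l])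
  finally show ?thesis .
qed

lemma P_deriv:
  fixes F :: "real^3 \<Rightarrow> real"
  assumes sm: "smooth_on W F" and W: "open W" and x: "x \<in> W"
    and v: "(v has_derivative v') (at x)"
  shows "((\<lambda>y. frechet_derivative F (at y) (v y)) has_derivative
     (\<lambda>u. frechet_derivative F (at x) (v' u) + frechet_derivative (\<lambda>y. frechet_derivative F (at y) (v x)) (at x) u)) (at x)"
proof -
  define H where "H = (\<lambda>j::3. frechet_derivative (\<lambda>y. frechet_derivative F (at y) (axis j 1)) (at x))"
  have hj: "((\<lambda>y. frechet_derivative F (at y) (axis j 1)) has_derivative H j) (at x)" for j
    unfolding H_def by (rule smooth_hasD[OF smooth_D[OF sm] W x])
  have linF: "linear (frechet_derivative F (at y))" if "y \<in> W" for y
    using smooth_hasD[OF sm W that] has_derivative_linear by blast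
  have exp: "frechet_derivative F (at y) w = (\<Sum>j\<in>UNIV. w$j * frechet_derivative F (at y) (axis j 1))"
    if "y \<in> W" for y w using lin_expand[OF linF[OF that]] .
  have vj: "((\<lambda>y. v y $ j) has_derivative (\<lambda>u. v' u $ j)) (at x)" for j
    using bounded_linear.has_derivative[OF bounded_linear_vec_nth v] .
  have D1: "((\<lambda>y. \<Sum>j\<in>UNIV. v y $ j * frechet_derivative F (at y) (axis j 1)) has_derivative
       (\<lambda>u. \<Sum>j\<in>UNIV. v x $ j * H j u + v' u $ j * frechet_derivative F (at x) (axis j 1))) (at x)"
    by (intro has_derivative_sum has_derivative_mult vj hj)
  have D2: "((\<lambda>y. \<Sum>j\<in>UNIV. v x $ j * frechet_derivative F (at y) (axis j 1)) has_derivative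
       (\<lambda>u. \<Sum>j\<in>UNIV. v x $ j * H j u)) (at x)"
    by (intro has_derivative_sum has_derivative_mult_right hj)
  have D2': "((\<lambda>y. frechet_derivative F (at y) (v x)) has_derivative
       (\<lambda>u. \<Sum>j\<in>UNIV. v x $ j * H j u)) (at x)"
    by (rule has_derivative_transform_within_open[OF D2 W x]) (metis exp)
  have fe: "frechet_derivative (\<lambda>y. frechet_derivative F (at y) (v x)) (at x) = (\<lambda>u. \<Sum>j\<in>UNIV. v x $ j * H j u)"
    using frechet_derivative_at[OF D2'] by simp
  have D1': "((\<lambda>y. frechet_derivative F (at y) (v y)) has_derivative
       (\<lambda>u. \<Sum>j\<in>UNIV. v x $ j * H j u + v' u $ j * frechet_derivative F (at x) (axis j 1))) (at x)"
    by (rule has_derivative_transform_within_open[OF D1 W x]) (metis exp)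
  have eq: "(\<lambda>u. \<Sum>j\<in>UNIV. v x $ j * H j u + v' u $ j * frechet_derivative F (at x) (axis j 1))
     = (\<lambda>u. frechet_derivative F (at x) (v' u) + frechet_derivative (\<lambda>y. frechet_derivative F (at y) (v x)) (at x) u)"
    unfolding fe
  proof (rule ext)
    fix u
    show "(\<Sum>j\<in>UNIV. v x $ j * H j u + v' u $ j * frechet_derivative F (at x) (axis j 1)) =
      frechet_derivative F (at x) (v' u) + (\<Sum>j\<in>UNIV. v x $ j * H j u)"
      using exp[OF x, of "v' u"] by (simp add: sum.distrib)
  qed
  show ?thesis using D1' eq by simp
qed

lemma alpha_lie:
  fixes A X Y :: "real^3 \<Rightarrow> real^3"
  assumes Q: "open Q" "x \<in> Q"
    and dA: "(A has_derivative frechet_derivative A (at x)) (at x)"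
    and dX: "(X has_derivative frechet_derivative X (at x)) (at x)"
    and dY: "(Y has_derivative frechet_derivative Y (at x)) (at x)"
    and cX: "\<forall>y\<in>Q. A y \<bullet> X y = cx" and cY: "\<forall>y\<in>Q. A y \<bullet> Y y = cy"
  shows "A x \<bullet> lie X Y x = - dalpha A x (X x) (Y x)"
proof -
  have z: "A x \<bullet> frechet_derivative Z (at x) h + frechet_derivative A (at x) h \<bullet> Z x = 0"
    if dZ: "(Z has_derivative frechet_derivative Z (at x)) (at x)" and cZ: "\<forall>y\<in>Q. A y \<bullet> Z y = c"
    for Z :: "real^3 \<Rightarrow> real^3" and c h
  proof -
    have d1: "((\<lambda>y. A y \<bullet> Z y) has_derivative
      (\<lambda>h. A x \<bullet> frechet_derivative Z (at x) h + frechet_derivative A (at x) h \<bullet> Z x)) (at x)"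
      using has_derivative_inner[OF dA dZ] .
    have "((\<lambda>_. c) has_derivative (\<lambda>_. 0)) (at x)" by simp
    hence d2: "((\<lambda>y. A y \<bullet> Z y) has_derivative (\<lambda>_. 0)) (at x)"
      by (rule has_derivative_transform_within_open[OF _ Q]) (use cZ in simp)
    from has_derivative_unique[OF d1 d2] show ?thesis by (simp add: fun_eq_iff)
  qed
  have zX: "A x \<bullet> frechet_derivative X (at x) (Y x) = - (frechet_derivative A (at x) (Y x) \<bullet> X x)"
    using z[OF dX cX, of "Y x"] by linarith
  have zY: "A x \<bullet> frechet_derivative Y (at x) (X x) = - (frechet_derivative A (at x) (X x) \<bullet> Y x)"
    using z[OF dY cY, of "X x"] by linarith
  show ?thesis unfolding lie_def dalpha_def inner_diff_right zX zY by simp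
qed

lemma curve_deriv:
  fixes f g :: "real^3 \<Rightarrow> real"
  assumes df: "(f has_derivative f') (at x)" and Q: "open Q" "x \<in> Q" and eq: "\<forall>y\<in>N \<inter> Q. g y = f y"
    and e: "e > 0" and g0: "\<gamma> 0 = x" and gN: "\<forall>t\<in>{-e<..<e}. \<gamma> t \<in> N"
    and gd: "(\<gamma> has_vector_derivative w) (at 0)"
  shows "((g \<circ> \<gamma>) has_real_derivative f' w) (at 0)"
proof -
  have "isCont \<gamma> 0" using has_vector_derivative_continuous[OF gd] .
  obtain r where r: "r>0" "ball x r \<subseteq> Q" using Q open_contains_ball by blast
  obtain d where d: "d>0" "\<forall>t. dist t 0 < d \<longrightarrow> dist (\<gamma> t) (\<gamma> 0) < r"
    using \<open>isCont \<gamma> 0\<close> r(1) unfolding continuous_at_eps_delta by blast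
  have z: "(\<lambda>t. f (\<gamma> t)) t = (g \<circ> \<gamma>) t" if "t \<in> ball 0 (min d e)" for t
  proof -
    have "\<gamma> t \<in> ball x r" using d(2) that g0 by (auto simp: dist_commute)
    hence "\<gamma> t \<in> Q" using r by blast
    moreover have "\<gamma> t \<in> N" using gN that by (auto simp: dist_real_def abs_less_iff)
    ultimately show ?thesis using eq by simp
  qed
  have Fd: "(f has_derivative f') (at (\<gamma> 0))" using df g0 by simp
  have D: "((\<lambda>t. f (\<gamma> t)) has_derivative (\<lambda>h. f' (h *\<^sub>R w))) (at 0)"
    using has_derivative_compose[OF gd[unfolded has_vector_derivative_def] Fd] .
  have lin: "linear f'" using df has_derivative_linear by blast
  have "(\<lambda>h. f' (h *\<^sub>R w)) = (*) (f' w)"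
    using linear_scale[OF lin] by (auto simp: fun_eq_iff)
  hence D1: "((\<lambda>t. f (\<gamma> t)) has_derivative (*) (f' w)) (at 0)" using D by simp
  have "((g \<circ> \<gamma>) has_derivative (*) (f' w)) (at 0)"
    by (rule has_derivative_transform_within_open[OF D1 open_ball[of "0::real" "min d e"] _ z]) (use d(1) e in simp_all)
  thus ?thesis by (simp add: has_field_derivative_def)
qed

lemma curve_deriv_zero:
  fixes f :: "real^3 \<Rightarrow> real"
  assumes df: "(f has_derivative f') (at x)" and Q: "open Q" "x \<in> Q" and eq: "\<forall>y\<in>N \<inter> Q. f y = 0"
    and w: "w \<in> tangent_space N x"
  shows "f' w = 0"
proof -
  obtain \<gamma> e where g: "e > 0" "\<gamma> 0 = x" "\<forall>t\<in>{-e<..<e}. \<gamma> t \<in> N" "(\<gamma> has_vector_derivative w) (at 0)"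
    using w unfolding tangent_space_def by blast
  have "(((\<lambda>_. 0) \<circ> \<gamma>) has_real_derivative f' w) (at 0)"
    by (rule curve_deriv[OF df Q _ g]) (use eq in auto)
  moreover have "(((\<lambda>_. 0::real) \<circ> \<gamma>) has_real_derivative 0) (at 0)" by (simp add: o_def)
  ultimately show ?thesis using DERIV_unique by blast
qed

lemma distr_span:
  assumes Ax: "A x \<noteq> 0" and u: "u1 \<in> distr A x" "u2 \<in> distr A x"
    and lA: "linear (frechet_derivative A (at x))"
    and d: "dalpha A x u1 u2 \<noteq> 0"
  shows "distr A x \<subseteq> span {u1, u2}"
proof -
  let ?D = "frechet_derivative A (at x)"
  have ne: "u1 \<noteq> u2" using d by (auto simp: dalpha_def inner_commute)
  have u2: "u2 \<noteq> 0" using d by (auto simp: dalpha_def linear_0[OF lA])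
  have nsp: "u1 \<notin> span {u2}"
  proof
    assume "u1 \<in> span {u2}"
    then obtain k where "u1 = k *\<^sub>R u2" by (auto simp: span_singleton)
    hence "dalpha A x u1 u2 = 0"
      by (simp add: dalpha_def linear_scale[OF lA] inner_commute)
    thus False using d by simp
  qed
  have ind: "independent {u1, u2}"
    using ne u2 nsp by (simp add: independent_insert)
  have dim: "dim (distr A x) = 2"
    using dim_hyperplane[OF Ax] by (simp add: distr_def)
  have "card {u1, u2} = dim (distr A x)" using ne dim by simp
  from card_eq_dim[of "{u1,u2}" "distr A x", OF _ this] u ind
  show ?thesis by simp
qed

theorem mainTheorem5:
  fixes U N V :: "(real^3) set"
    and A v0 v1 v2 :: "real^3 \<Rightarrow> real^3"
    and g :: "real^3 \<Rightarrow> real^3 \<Rightarrow> real^3 \<Rightarrow> real"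
    and c :: "nat \<Rightarrow> nat \<Rightarrow> nat \<Rightarrow> real^3 \<Rightarrow> real"
  assumes "contact_form U A"
    and "sr_metric U A g"
    and "normalized U A g"
    and "reeb U A v0"
    and "surface U N"
    and "adapted_frame U A g N V v1 v2"
    and "\<forall>x\<in>V. \<forall>i\<in>{0..2}. \<forall>j\<in>{0..2}.
           lie ([v0, v1, v2] ! i) ([v0, v1, v2] ! j) x
             = (\<Sum>k\<in>{0..2}. c i j k x *\<^sub>R ([v0, v1, v2] ! k) x)"
  shows "\<forall>x\<in>N \<inter> V. regular_pt A N x \<longrightarrow>
           COT N v0 v1 v2 x = - c 0 1 2 x - DOT N v0 v2 x * c 1 2 2 x"
proof (intro ballI impI)
  fix x assume xNV: "x \<in> N \<inter> V" and reg: "regular_pt A N x"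
  have oU: "open U" and smA: "smooth_on U A" and Anz: "\<forall>y\<in>U. A y \<noteq> 0"
    using assms(1) unfolding contact_form_def by auto
  have smv0: "smooth_on U v0" and Av0: "\<forall>y\<in>U. A y \<bullet> v0 y = 1"
    and dv0: "\<forall>y\<in>U. \<forall>w. dalpha A y (v0 y) w = 0"
    using assms(4) unfolding reeb_def by auto
  have oV: "open V" and VU: "V \<subseteq> U" and smv1: "smooth_on V v1" and smv2: "smooth_on V v2"
    and fr: "\<forall>y\<in>V. v1 y \<in> distr A y \<and> v2 y \<in> distr A y \<and> dalpha A y (v1 y) (v2 y) = 1"
    and v1T: "\<forall>y\<in>N \<inter> V. v1 y \<in> tangent_space N y"
    using assms(6) unfolding adapted_frame_def by auto
  have xV: "x \<in> V" and xN: "x \<in> N" using xNV by auto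
  have xU: "x \<in> U" using xV VU by auto
  have ex: "\<exists>W (F::real^3 \<Rightarrow> real). open W \<and> x \<in> W \<and> smooth_on W F \<and>
      (\<forall>y\<in>W. frechet_derivative F (at y) \<noteq> (\<lambda>_. 0)) \<and> N \<inter> W = {y\<in>W. F y = 0}"
    by (rule bspec[OF conjunct2[OF assms(5)[unfolded surface_def]] xN])
  then obtain W and F :: "real^3 \<Rightarrow> real" where W: "open W" "x \<in> W" and smF: "smooth_on W F"
     and Fnz: "\<forall>y\<in>W. frechet_derivative F (at y) \<noteq> (\<lambda>_. 0)"
     and NW: "N \<inter> W = {y\<in>W. F y = 0}"
    by (elim exE conjE) (rule that)
  define Q where "Q = W \<inter> V"
  have oQ: "open Q" and xQ: "x \<in> Q" using W oV xV by (auto simp: Q_def)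
  have hv0: "(v0 has_derivative frechet_derivative v0 (at y)) (at y)" if "y \<in> V" for y
    using smooth_hasD[OF smv0 oU] that VU by blast
  have hv1: "(v1 has_derivative frechet_derivative v1 (at y)) (at y)" if "y \<in> V" for y
    using smooth_hasD[OF smv1 oV] that by blast
  have hv2: "(v2 has_derivative frechet_derivative v2 (at y)) (at y)" if "y \<in> V" for y
    using smooth_hasD[OF smv2 oV] that by blast
  have hA: "(A has_derivative frechet_derivative A (at x)) (at x)"
    using smooth_hasD[OF smA oU xU] .
  have tk: "frechet_derivative F (at y) w = 0" if "y \<in> W" "w \<in> tangent_space N y" for y w
    using tangent_ker[OF smF W(1) that(1) NW that(2)] .
  have kt: "w \<in> tangent_space N y" if "y \<in> W" "y \<in> N" "frechet_derivative F (at y) w = 0" for y w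
  proof -
    have Fy: "F y = 0" using NW that by blast
    show ?thesis using ker_tangent[OF smF W(1) that(1) Fy Fnz[rule_format, OF that(1)] NW that(3)] .
  qed
  define \<phi> where "\<phi> = frechet_derivative F (at x)"
  have lin\<phi>: "linear \<phi>" unfolding \<phi>_def using smooth_hasD[OF smF W(1,2)] has_derivative_linear by blast
  have linFy: "linear (frechet_derivative F (at y))" if "y \<in> W" for y
    using smooth_hasD[OF smF W(1) that] has_derivative_linear by blast
  define P0 where "P0 = (\<lambda>y. frechet_derivative F (at y) (v0 y))"
  define P1 where "P1 = (\<lambda>y. frechet_derivative F (at y) (v1 y))"
  define P2 where "P2 = (\<lambda>y. frechet_derivative F (at y) (v2 y))"
  define H where "H = (\<lambda>u w. frechet_derivative (\<lambda>y. frechet_derivative F (at y) w) (at x) u)"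
  have Hsym: "H u w = H w u" for u w unfolding H_def by (rule clairaut[OF smF W(1,2), where u=w and w=u])
  define D0 where "D0 = (\<lambda>u. \<phi> (frechet_derivative v0 (at x) u) + H u (v0 x))"
  define D1 where "D1 = (\<lambda>u. \<phi> (frechet_derivative v1 (at x) u) + H u (v1 x))"
  define D2 where "D2 = (\<lambda>u. \<phi> (frechet_derivative v2 (at x) u) + H u (v2 x))"
  have dP0: "(P0 has_derivative D0) (at x)"
    unfolding P0_def D0_def H_def \<phi>_def using P_deriv[OF smF W(1,2) hv0[OF xV]] .
  have dP1: "(P1 has_derivative D1) (at x)"
    unfolding P1_def D1_def H_def \<phi>_def using P_deriv[OF smF W(1,2) hv1[OF xV]] .
  have dP2: "(P2 has_derivative D2) (at x)"
    unfolding P2_def D2_def H_def \<phi>_def using P_deriv[OF smF W(1,2) hv2[OF xV]] .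
  have linD1: "linear D1" using dP1 has_derivative_linear by blast
  have E1: "D0 (v1 x) - D1 (v0 x) = \<phi> (lie v1 v0 x)"
    unfolding D0_def D1_def lie_def using Hsym[of "v1 x" "v0 x"] by (simp add: linear_diff[OF lin\<phi>])
  have E2: "D2 (v1 x) - D1 (v2 x) = \<phi> (lie v1 v2 x)"
    unfolding D2_def D1_def lie_def using Hsym[of "v1 x" "v2 x"] by (simp add: linear_diff[OF lin\<phi>])
  have P1z: "\<forall>y\<in>N \<inter> Q. P1 y = 0" unfolding P1_def Q_def using tk v1T by blast
  have p1: "P1 x = 0" using P1z xN xQ by blast
  have p2: "P2 x \<noteq> 0"
  proof
    assume p2: "P2 x = 0"
    have Ax: "A x \<noteq> 0" using Anz xU by blast
    have lA: "linear (frechet_derivative A (at x))" using hA has_derivative_linear by blast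
    have sp: "distr A x \<subseteq> span {v1 x, v2 x}"
      using distr_span[OF Ax _ _ lA] fr xV by auto
    have Dker: "\<phi> w = 0" if "w \<in> distr A x" for w
    proof -
      have sw: "w \<in> span {v1 x, v2 x}" using sp that by blast
      have z: "\<phi> u = 0" if "u \<in> {v1 x, v2 x}" for u using that p1 p2 by (auto simp: P1_def P2_def \<phi>_def)
      show ?thesis by (rule linear_eq_0_on_span[OF lin\<phi> z sw])
    qed
    have kerD: "w \<in> distr A x" if "\<phi> w = 0" for w
    proof -
      define w' where "w' = w - (A x \<bullet> w) *\<^sub>R v0 x"
      have "w' \<in> distr A x" using Av0 xU by (simp add: distr_def w'_def inner_diff_right)
      hence "\<phi> w' = 0" by (rule Dker)
      hence e: "(A x \<bullet> w) * \<phi> (v0 x) = 0" using that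
        by (simp add: w'_def linear_diff[OF lin\<phi>] linear_scale[OF lin\<phi>])
      have "\<phi> (v0 x) \<noteq> 0"
      proof
        assume z: "\<phi> (v0 x) = 0"
        have "\<phi> u = 0" for u
        proof -
          define u' where "u' = u - (A x \<bullet> u) *\<^sub>R v0 x"
          have "u' \<in> distr A x" using Av0 xU by (simp add: distr_def u'_def inner_diff_right)
          hence "\<phi> u' = 0" by (rule Dker)
          thus ?thesis using z by (simp add: u'_def linear_diff[OF lin\<phi>] linear_scale[OF lin\<phi>])
        qed
        hence "\<phi> = (\<lambda>_. 0)" by (simp add: fun_eq_iff)
        thus False using Fnz W(2) unfolding \<phi>_def by blast
      qed
      thus ?thesis using e by (simp add: distr_def)
    qed
    have "tangent_space N x = distr A x"
    proof
      show "tangent_space N x \<subseteq> distr A x" using tk[OF W(2)] kerD unfolding \<phi>_def by blast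
      show "distr A x \<subseteq> tangent_space N x" using kt[OF W(2) xN] Dker unfolding \<phi>_def by blast
    qed
    thus False using reg unfolding regular_pt_def by blast
  qed
  have s3: "(\<Sum>k\<in>{0..2::nat}. f k) = f 0 + f 1 + (f 2::real^3)" for f
    by (simp add: numeral_2_eq_2)
  have a7: "\<And>i j. i \<in> {0..2} \<Longrightarrow> j \<in> {0..2} \<Longrightarrow> lie ([v0, v1, v2] ! i) ([v0, v1, v2] ! j) x
             = (\<Sum>k\<in>{0..2}. c i j k x *\<^sub>R ([v0, v1, v2] ! k) x)"
    using assms(7) xV by blast
  have h01: "lie ([v0,v1,v2]!0) ([v0,v1,v2]!1) x = (\<Sum>k\<in>{0..2}. c 0 1 k x *\<^sub>R ([v0,v1,v2]!k) x)"
    by (rule a7) simp_all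
  hence L01: "lie v0 v1 x = c 0 1 0 x *\<^sub>R v0 x + c 0 1 1 x *\<^sub>R v1 x + c 0 1 2 x *\<^sub>R v2 x"
    unfolding s3 by simp
  have h12: "lie ([v0,v1,v2]!1) ([v0,v1,v2]!2) x = (\<Sum>k\<in>{0..2}. c 1 2 k x *\<^sub>R ([v0,v1,v2]!k) x)"
    by (rule a7) simp_all
  hence L12: "lie v1 v2 x = c 1 2 0 x *\<^sub>R v0 x + c 1 2 1 x *\<^sub>R v1 x + c 1 2 2 x *\<^sub>R v2 x"
    unfolding s3 by simp
  have Av0V: "\<forall>y\<in>V. A y \<bullet> v0 y = 1" using Av0 VU by blast
  have Av1V: "\<forall>y\<in>V. A y \<bullet> v1 y = 0" using fr by (simp add: distr_def)
  have Av2V: "\<forall>y\<in>V. A y \<bullet> v2 y = 0" using fr by (simp add: distr_def)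
  have al01: "A x \<bullet> lie v0 v1 x = - dalpha A x (v0 x) (v1 x)"
    by (rule alpha_lie[OF oV xV hA hv0[OF xV] hv1[OF xV] Av0V Av1V])
  have al12: "A x \<bullet> lie v1 v2 x = - dalpha A x (v1 x) (v2 x)"
    by (rule alpha_lie[OF oV xV hA hv1[OF xV] hv2[OF xV] Av1V Av2V])
  have c010: "c 0 1 0 x = 0"
    using al01 dv0 xU Av0V Av1V Av2V xV unfolding L01 by (simp add: inner_add_right)
  have c120: "c 1 2 0 x = -1"
    using al12 fr xV Av0V Av1V Av2V unfolding L12 by (simp add: inner_add_right)
  define a where "a = P0 x / P2 x"
  have "isCont P2 x" using has_derivative_continuous[OF dP2] .
  then obtain \<delta> where \<delta>: "\<delta> > 0" "\<forall>y. dist y x < \<delta> \<longrightarrow> dist (P2 y) (P2 x) < \<bar>P2 x\<bar>"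
    using p2 unfolding continuous_at_eps_delta by (meson zero_less_abs_iff)
  define Q' where "Q' = Q \<inter> ball x \<delta>"
  have oQ': "open Q'" and xQ': "x \<in> Q'" using oQ xQ \<delta> by (auto simp: Q'_def)
  have P2nz: "P2 y \<noteq> 0" if "y \<in> Q'" for y
  proof
    assume "P2 y = 0"
    with \<delta>(2) that show False by (auto simp: Q'_def dist_commute dist_real_def)
  qed
  have DOTeq: "DOT N v0 v2 y = P0 y / P2 y" if y: "y \<in> N \<inter> Q'" for y
  proof -
    have yW: "y \<in> W" and yN: "y \<in> N" and nz: "P2 y \<noteq> 0" using y P2nz by (auto simp: Q'_def Q_def)
    have lin: "linear (frechet_derivative F (at y))" using linFy[OF yW] .
    have ev: "frechet_derivative F (at y) (v0 y - b *\<^sub>R v2 y) = P0 y - b * P2 y" for b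
      by (simp add: P0_def P2_def linear_diff[OF lin] linear_scale[OF lin])
    show ?thesis unfolding DOT_def
    proof (rule the_equality)
      show "v0 y - (P0 y / P2 y) *\<^sub>R v2 y \<in> tangent_space N y"
        using kt[OF yW yN] ev nz by simp
      fix b assume "v0 y - b *\<^sub>R v2 y \<in> tangent_space N y"
      hence "P0 y - b * P2 y = 0" using tk[OF yW] ev by metis
      thus "b = P0 y / P2 y" using nz by (simp add: field_simps)
    qed
  qed
  have DOTx: "DOT N v0 v2 x = a" using DOTeq[of x] xN xQ' by (simp add: a_def)
  define d0 where "d0 = - P0 x * (inverse (P2 x) * D2 (v1 x) * inverse (P2 x)) + D0 (v1 x) / P2 x"
  have dQ: "((\<lambda>y. P0 y / P2 y) has_derivative (\<lambda>h. - P0 x * (inverse (P2 x) * D2 h * inverse (P2 x)) + D0 h / P2 x)) (at x)"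
    using has_derivative_divide[OF dP0 dP2 p2] .
  have along: "has_deriv_along N (DOT N v0 v2) x (v1 x) d0"
    unfolding has_deriv_along_def
  proof (intro allI impI, elim conjE)
    fix \<gamma> :: "real \<Rightarrow> real^3" and e :: real
    assume "e > 0" "\<gamma> 0 = x" "\<forall>t\<in>{-e<..<e}. \<gamma> t \<in> N" "(\<gamma> has_vector_derivative v1 x) (at 0)"
    from curve_deriv[OF dQ oQ' xQ' _ this]
    show "((DOT N v0 v2 \<circ> \<gamma>) has_real_derivative d0) (at 0)"
      using DOTeq unfolding d0_def by blast
  qed
  have DA: "deriv_along N (DOT N v0 v2) x (v1 x) = d0"
    unfolding deriv_along_def
  proof (rule the_equality[where P = "has_deriv_along N (DOT N v0 v2) x (v1 x)", OF along])
    fix d' assume h: "has_deriv_along N (DOT N v0 v2) x (v1 x) d'"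
    obtain \<beta> e where b: "e > 0" "\<beta> 0 = x" "\<forall>t\<in>{-e<..<e}. \<beta> t \<in> N" "(\<beta> has_vector_derivative v1 x) (at 0)"
      using v1T xNV unfolding tangent_space_def by blast
    have "((DOT N v0 v2 \<circ> \<beta>) has_real_derivative d') (at 0)" using h b unfolding has_deriv_along_def by blast
    moreover have "((DOT N v0 v2 \<circ> \<beta>) has_real_derivative d0) (at 0)" using along b unfolding has_deriv_along_def by blast
    ultimately show "d' = d0" using DERIV_unique by blast
  qed
  have Pv: "P0 x = \<phi> (v0 x)" "P1 x = \<phi> (v1 x)" "P2 x = \<phi> (v2 x)" by (simp_all add: P0_def P1_def P2_def \<phi>_def)
  have wT: "v0 x - a *\<^sub>R v2 x \<in> tangent_space N x"
  proof (rule kt[OF W(2) xN])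
    show "frechet_derivative F (at x) (v0 x - a *\<^sub>R v2 x) = 0"
      using p2 unfolding \<phi>_def[symmetric] by (simp add: linear_diff[OF lin\<phi>] linear_scale[OF lin\<phi>] Pv[symmetric] a_def)
  qed
  have "D1 (v0 x - a *\<^sub>R v2 x) = 0" by (rule curve_deriv_zero[OF dP1 oQ xQ P1z wT])
  hence E3: "D1 (v0 x) = a * D1 (v2 x)" by (simp add: linear_diff[OF linD1] linear_scale[OF linD1])
  have lie10: "lie v1 v0 x = - lie v0 v1 x" by (simp add: lie_def)
  have l10: "\<phi> (lie v1 v0 x) = - (c 0 1 2 x * P2 x)"
    unfolding lie10 L01 using c010 p1 Pv
    by (simp add: linear_neg[OF lin\<phi>] linear_add[OF lin\<phi>] linear_diff[OF lin\<phi>] linear_scale[OF lin\<phi>])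
  have l12: "\<phi> (lie v1 v2 x) = - P0 x + c 1 2 2 x * P2 x"
    unfolding L12 using c120 p1 Pv
    by (simp add: linear_add[OF lin\<phi>] linear_diff[OF lin\<phi>] linear_scale[OF lin\<phi>])
  have "COT N v0 v1 v2 x = d0 - a\<^sup>2" unfolding COT_def DA DOTx ..
  also have "\<dots> = - c 0 1 2 x - a * c 1 2 2 x"
  proof -
    have e1: "D0 (v1 x) = a * D1 (v2 x) - c 0 1 2 x * P2 x" using E1 E3 l10 by simp
    have e2: "D2 (v1 x) = D1 (v2 x) - P0 x + c 1 2 2 x * P2 x" using E2 l12 by simp
    have p0: "P0 x = a * P2 x" using p2 by (simp add: a_def)
    show ?thesis unfolding d0_def e1 e2 p0 using p2
      by (simp add: field_simps power2_eq_square)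
  qed
  finally show "COT N v0 v1 v2 x = - c 0 1 2 x - DOT N v0 v2 x * c 1 2 2 x" unfolding DOTx .
qed

end
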